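(* For all $0\le i\le r$ and all $\beta\in\Gamma_{i-1}$, the following identity of rational functions holds: $\pi_{i+1}^{\beta}/\pi_i^{\beta}=Y_i^{L_i(\beta)}$ (here $L_i(\beta)\in\mathbb Z$).
   Context: Let $(K,v)$ be a valued field with non-trivial value group $\Gamma$; $\Gamma_{\mathbb Q}=\Gamma\otimes\mathbb Q$. Let $\phi_0,\dots,\phi_r\in K[x]$ be the key polynomials and $\gamma_0,\dots,\gamma_r\in\Gamma_{\mathbb Q}$ the values of a MacLane chain $\mu_{-\infty}\xrightarrow{\phi_0,\gamma_0}\mu_0\to\cdots\xrightarrow{\phi_r,\gamma_r}\mu_r$ of augmented valuations on $K[x]$. Put $\Gamma_{\mu_{-1}}=\Gamma$; then $\Gamma_{\mu_i}=\langle\Gamma_{\mu_{i-1}},\gamma_i\rangle$, $e_i=(\Gamma_{\mu_i}:\Gamma_{\mu_{i-1}})<\infty$, $h_i=e_i\gamma_i\in\Gamma_{\mu_{i-1}}$. Fix a finitely generated $\Gamma_{-1}\subseteq\Gamma$ with $h_i\in\Gamma_{-1}+\langle\gamma_0,\dots,\gamma_{i-1}\rangle$ for all $i$; $\Gamma_i=\langle\Gamma_{-1},\gamma_0,\dots,\gamma_i\rangle$ (free of common rank $n$, $h_i\in\Gamma_{i-1}$). Fix a $\mathbb Z$-basis $\iota_{0,1},\dots,\iota_{0,n}$ of $\Gamma_{-1}$; recursively, given the basis $\iota_{i,\cdot}$ of $\Gamma_{i-1}$, write $\gamma_i=\sum_j(h_{i,j}/e_{i,j})\iota_{i,j}$ (coprime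 integers, $e_{i,j}>0$), $e'_{i,1}=d_{i,1}=1$, $e'_{i,j}=e_{i,1}\cdots e_{i,j-1}/(d_{i,1}\cdots d_{i,j-1})$, $d_{i,j}=\gcd(e_{i,j},e'_{i,j})$ ($j>1$); let $\ell_{i,j},\ell'_{i,j}$ be the integers with $\ell_{i,j}h_{i,j}e'_{i,j}+\ell'_{i,j}e_{i,j}=d_{i,j}$, $0\le\ell_{i,j}<e_{i,j}/d_{i,j}$; $(\iota_{i+1,1}\cdots\iota_{i+1,n})=(\iota_{i,1}\cdots\iota_{i,n})Q_i$, $Q_i$ lower triangular with diagonal $d_{i,j}/e_{i,j}$ and $(m,j)$-entry $\ell_{i,j}e'_{i,j}h_{i,m}/e_{i,m}$ ($m>j$), a basis of $\Gamma_i$. Choose $\pi_{0,j}\in K^*$ with $v(\pi_{0,j})=\iota_{0,j}$; for $0\le i\le r$, $\pi_{i+1,j}=\big(\phi_i\pi_{i,1}^{-h_{i,1}/e_{i,1}}\cdots\pi_{i,j-1}^{-h_{i,j-1}/e_{i,j-1}}\big)^{\ell_{i,j}e'_{i,j}}\pi_{i,j}^{\ell'_{i,j}}$ (integer exponents). For $0\le i\le r+1$ and $\alpha=\sum_jn_j\iota_{i,j}\in\Gamma_{i-1}$ ($n_j\in\mathbb Z$), $\pi_i^\alpha=\prod_j\pi_{i,j}^{n_j}$ (note $\Gamma_{i-1}\subseteq\Gamma_i$, so $\pi_{i+1}^\beta$ is defined for $\beta\in\Gamma_{i-1}$); $Y_i=\phi_i^{e_i}\pi_i^{-h_i}$. Let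 $L_{i,j}=\ell_{i,j}\ell'_{i,j+1}\cdots\ell'_{i,n}$ and let $L_i\colon\Gamma_{i-1}\otimes\mathbb Q\to\mathbb Q$ be the $\mathbb Q$-linear map with $L_i(\iota_{i,j})=L_{i,j}$. *)

theory Defs
  imports "HOL-Computational_Algebra.Polynomial" "HOL-Computational_Algebra.Fraction_Field"
begin

text \<open>
The group Gamma_{-1} is identified with Z^n via its basis iota_{0,1..n};
all gamma_i lie in Gamma_{-1} (x) Q, so gamma_i is given by its rational coordinate
vector  gam i :: nat => rat  (indices 1..n) with respect to iota_{0,.}.
\<close>

text \<open>Gamma_{k-1} = Gamma_{-1} + <gamma_0,...,gamma_{k-1}>, in iota_0-coordinates.\<close>
definition inLat :: "nat \<Rightarrow> (nat \<Rightarrow> nat \<Rightarrow> rat) \<Rightarrow> nat \<Rightarrow> (nat \<Rightarrow> rat) \<Rightarrow> bool" where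
  "inLat n gam k v \<longleftrightarrow>
     (\<exists>a b :: nat \<Rightarrow> int. \<forall>j\<in>{1..n}. v j = of_int (a j) + (\<Sum>l<k. of_int (b l) * gam l j))"

text \<open>e_i = (Gamma_i : Gamma_{i-1}), the order of gamma_i modulo Gamma_{i-1}.\<close>
definition eidx :: "nat \<Rightarrow> (nat \<Rightarrow> nat \<Rightarrow> rat) \<Rightarrow> nat \<Rightarrow> nat" where
  "eidx n gam i = (LEAST k::nat. 0 < k \<and> inLat n gam i (\<lambda>j. of_nat k * gam i j))"

definition hnum :: "rat \<Rightarrow> int" where "hnum x = fst (quotient_of x)"
definition eden :: "rat \<Rightarrow> int" where "eden x = snd (quotient_of x)"

text \<open>e'_j (j >= 1): e'_1 = 1, e'_{j+1} = e'_j e_j / d_j, with d_1 = 1, d_j = gcd(e_j,e'_j).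
 This is e'_j = e_1...e_{j-1}/(d_1...d_{j-1}).\<close>
fun eprime :: "(nat \<Rightarrow> int) \<Rightarrow> nat \<Rightarrow> int" where
  "eprime e 0 = 1"
| "eprime e (Suc 0) = 1"
| "eprime e (Suc (Suc j)) =
     eprime e (Suc j) * e (Suc j) div (if j = 0 then 1 else gcd (e (Suc j)) (eprime e (Suc j)))"

definition dfac :: "(nat \<Rightarrow> int) \<Rightarrow> nat \<Rightarrow> int" where
  "dfac e j = (if j \<le> 1 then 1 else gcd (e j) (eprime e j))"

text \<open>Stage data, given x = coordinates of gamma_i in the basis iota_{i,.}:
 x j = h_{i,j}/e_{i,j}.\<close>
definition hh :: "(nat \<Rightarrow> rat) \<Rightarrow> nat \<Rightarrow> int" where "hh x j = hnum (x j)"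
definition ee :: "(nat \<Rightarrow> rat) \<Rightarrow> nat \<Rightarrow> int" where "ee x j = eden (x j)"
definition ep :: "(nat \<Rightarrow> rat) \<Rightarrow> nat \<Rightarrow> int" where "ep x j = eprime (ee x) j"
definition dd :: "(nat \<Rightarrow> rat) \<Rightarrow> nat \<Rightarrow> int" where "dd x j = dfac (ee x) j"

definition ellpair :: "(nat \<Rightarrow> rat) \<Rightarrow> nat \<Rightarrow> int \<times> int" where
  "ellpair x j = (THE (a, b). a * hh x j * ep x j + b * ee x j = dd x j
                       \<and> 0 \<le> a \<and> a < ee x j div dd x j)"
definition ell :: "(nat \<Rightarrow> rat) \<Rightarrow> nat \<Rightarrow> int" where "ell x j = fst (ellpair x j)"
definition ell' :: "(nat \<Rightarrow> rat) \<Rightarrow> nat \<Rightarrow> int" where "ell' x j = snd (ellpair x j)"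

text \<open>The matrix Q_i: (m,j)-entry; (iota_{i+1,.}) = (iota_{i,.}) Q_i.\<close>
definition Qm :: "(nat \<Rightarrow> rat) \<Rightarrow> nat \<Rightarrow> nat \<Rightarrow> rat" where
  "Qm x m j = (if m = j then of_int (dd x j) / of_int (ee x j)
               else if j < m then of_int (ell x j * ep x j) * x m else 0)"

definition Lcoef :: "nat \<Rightarrow> (nat \<Rightarrow> rat) \<Rightarrow> nat \<Rightarrow> int" where
  "Lcoef n x j = ell x j * (\<Prod>l\<in>{j<..n}. ell' x l)"

definition lsolve :: "nat \<Rightarrow> (nat \<Rightarrow> nat \<Rightarrow> rat) \<Rightarrow> (nat \<Rightarrow> rat) \<Rightarrow> nat \<Rightarrow> rat" where
  "lsolve n M b = (THE y. (\<forall>m\<in>{1..n}. (\<Sum>j\<in>{1..n}. M m j * y j) = b m)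
                         \<and> (\<forall>j. j \<notin> {1..n} \<longrightarrow> y j = 0))"

text \<open>gcoord n gam i k = coordinates of gamma_k in the basis iota_{i,.}.\<close>
fun gcoord :: "nat \<Rightarrow> (nat \<Rightarrow> nat \<Rightarrow> rat) \<Rightarrow> nat \<Rightarrow> nat \<Rightarrow> nat \<Rightarrow> rat" where
  "gcoord n gam 0 = (\<lambda>k j. if j \<in> {1..n} then gam k j else 0)"
| "gcoord n gam (Suc i) = (\<lambda>k. lsolve n (Qm (gcoord n gam i i)) (gcoord n gam i k))"

text \<open>pi_{i,j}.  Note (phi_i pi_{i,1}^{-h_1/e_1}...)^{l e'} has the integer exponents
 -l e' h_l / e_l (exact divisions).\<close>
fun piv :: "nat \<Rightarrow> (nat \<Rightarrow> nat \<Rightarrow> rat) \<Rightarrow> (nat \<Rightarrow> 'a::field) \<Rightarrow> (nat \<Rightarrow> 'a) \<Rightarrow> nat \<Rightarrow> nat \<Rightarrow> 'a" where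
  "piv n gam phi p0 0 j = p0 j"
| "piv n gam phi p0 (Suc i) j =
     (let x = gcoord n gam i i in
        phi i powi (ell x j * ep x j)
        * (\<Prod>l\<in>{1..<j}. piv n gam phi p0 i l powi (- (ell x j * ep x j * hh x l div ee x l)))
        * piv n gam phi p0 i j powi (ell' x j))"

text \<open>pi_i^alpha for alpha = sum_j c_j iota_{i,j}.\<close>
definition pipow :: "nat \<Rightarrow> (nat \<Rightarrow> nat \<Rightarrow> rat) \<Rightarrow> (nat \<Rightarrow> 'a::field) \<Rightarrow> (nat \<Rightarrow> 'a) \<Rightarrow> nat \<Rightarrow> (nat \<Rightarrow> int) \<Rightarrow> 'a" where
  "pipow n gam phi p0 i c = (\<Prod>j\<in>{1..n}. piv n gam phi p0 i j powi c j)"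

text \<open>Y_i = phi_i^{e_i} pi_i^{-h_i}; h_i = e_i gamma_i has iota_i-coordinates e_i h_{i,j}/e_{i,j}.\<close>
definition Yv :: "nat \<Rightarrow> (nat \<Rightarrow> nat \<Rightarrow> rat) \<Rightarrow> (nat \<Rightarrow> 'a::field) \<Rightarrow> (nat \<Rightarrow> 'a) \<Rightarrow> nat \<Rightarrow> 'a" where
  "Yv n gam phi p0 i =
     (let x = gcoord n gam i i; e = int (eidx n gam i) in
        phi i powi e * pipow n gam phi p0 i (\<lambda>j. - (e * hh x j div ee x j)))"

definition Lval :: "nat \<Rightarrow> (nat \<Rightarrow> nat \<Rightarrow> rat) \<Rightarrow> nat \<Rightarrow> (nat \<Rightarrow> int) \<Rightarrow> int" where
  "Lval n gam i c = (\<Sum>j\<in>{1..n}. c j * Lcoef n (gcoord n gam i i) j)"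

end

theory Submission
  imports Defs
begin


lemma prod_powi_sum:
  fixes x :: "'a::field"
  assumes "x \<noteq> 0" "finite A"
  shows "(\<Prod>j\<in>A. x powi f j) = x powi (\<Sum>j\<in>A. f j)"
  using assms(2) by (induction A rule: finite_induct) (auto simp: power_int_add assms(1))

lemma prod_powi_distrib:
  fixes f :: "_ \<Rightarrow> 'a::field"
  shows "(\<Prod>j\<in>A. f j) powi k = (\<Prod>j\<in>A. f j powi k)"
  by (induction A rule: infinite_finite_induct) (auto simp: power_int_mult_distrib)

lemma ee_pos: "ee x j > 0"
  by (simp add: ee_def eden_def quotient_of_denom_pos')

lemma hh_ee_coprime: "coprime (hh x j) (ee x j)"
  by (simp add: hh_def ee_def hnum_def eden_def quotient_of_coprime)

lemma x_eq: "x j = of_int (hh x j) / of_int (ee x j)"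
  by (simp add: hh_def ee_def hnum_def eden_def quotient_of_div)

lemma ep_1: "ep x (Suc 0) = 1" by (simp add: ep_def)

lemma dd_eq: "j \<ge> 1 \<Longrightarrow> dd x j = gcd (ee x j) (ep x j)"
  by (cases j) (auto simp: dd_def dfac_def ep_def)

lemma ep_Suc: "j \<ge> 1 \<Longrightarrow> ep x (Suc j) = ep x j * ee x j div dd x j"
proof (cases j)
  case (Suc j') thus ?thesis by (cases j') (auto simp: ep_def dd_def dfac_def)
qed simp

lemma ep_pos: "j \<ge> 1 \<Longrightarrow> ep x j > 0"
proof (induction j rule: dec_induct[where i=1])
  case base thus ?case by (simp add: ep_1)
next
  case (step m)
  have d: "dd x m = gcd (ee x m) (ep x m)" using step by (simp add: dd_eq)
  have dv: "dd x m dvd ee x m" by (simp add: d)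
  have dpos: "dd x m > 0" using ee_pos[of x m] by (simp add: d)
  have "ep x (Suc m) = ep x m * (ee x m div dd x m)"
    using step dv by (simp add: ep_Suc div_mult_swap)
  moreover have "ee x m div dd x m > 0"
    using dv dpos ee_pos[of x m] by (simp add: pos_imp_zdiv_pos_iff zdvd_imp_le)
  ultimately show ?case using step by simp
qed



lemma bez_unique:
  fixes h E e :: int
  assumes epos: "e > 0" and Epos: "E > 0" and cop: "coprime h e"
  shows "\<exists>!p. (case p of (a, b) \<Rightarrow> a * h * E + b * e = gcd e E \<and> 0 \<le> a \<and> a < e div gcd e E)"
proof -
  define d where "d = gcd e E"
  have gd: "gcd (h*E) e = d"
    using gcd_mult_left_left_cancel[of e h E] cop by (simp add: d_def gcd.commute coprime_commute)
  have dpos: "d > 0" using epos by (simp add: d_def)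
  obtain k where k: "e = d * k" unfolding d_def by (meson gcd_dvd1 dvdE)
  obtain m where m: "h * E = d * m" using gd by (metis gcd_dvd1 dvdE)
  have kpos: "k > 0" using k epos dpos by (simp add: zero_less_mult_iff)
  have edk: "e div d = k" using k dpos by simp
  have cmk: "coprime m k"
  proof -
    have "coprime ((h*E) div gcd (h*E) e) (e div gcd (h*E) e)"
      by (rule div_gcd_coprime) (use epos in auto)
    thus ?thesis using gd m k dpos by simp
  qed
  have key: "a * h * E + b * e = d \<longleftrightarrow> a * m + b * k = 1" for a b
  proof -
    have "a * h * E + b * e = d * (a * m + b * k)" using k m by (simp add: algebra_simps)
    thus ?thesis using dpos by auto
  qed
  obtain u v where uv: "u * m + v * k = 1"
  proof -
    have "gcd m k = 1" using cmk by simp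
    thus ?thesis using bezout_int[of m k] that by auto
  qed
  define a where "a = u mod k"
  define b where "b = v + (u div k) * m"
  have ex: "a * m + b * k = 1"
  proof -
    have gen: "r * m + (v + q * m) * k = u * m + v * k" if "u = q * k + r" for q r
      using that by (simp add: algebra_simps)
    have "a * m + b * k = u * m + v * k"
      unfolding a_def b_def by (rule gen) simp
    thus ?thesis using uv by simp
  qed
  have arange: "0 \<le> a" "a < k" using kpos by (auto simp: a_def)
  show ?thesis
  proof (rule ex1I[of _ "(a,b)"])
    show "case (a, b) of (a, b) \<Rightarrow> a * h * E + b * e = gcd e E \<and> 0 \<le> a \<and> a < e div gcd e E"
      using ex arange key edk by (simp add: d_def[symmetric])
  next
    fix p assume "case p of (a, b) \<Rightarrow> a * h * E + b * e = gcd e E \<and> 0 \<le> a \<and> a < e div gcd e E"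
    then obtain a' b' where p: "p = (a', b')" and e1: "a' * m + b' * k = 1" and r: "0 \<le> a'" "a' < k"
      using key edk by (cases p) (auto simp: d_def[symmetric])
    have "(a - a') * m = (b' - b) * k" using e1 ex by (simp add: algebra_simps)
    hence "k dvd (a - a') * m" by (metis dvd_triv_right)
    hence "k dvd (a - a')" using cmk by (simp add: coprime_commute coprime_dvd_mult_left_iff)
    moreover have "\<bar>a - a'\<bar> < k" using r arange by auto
    ultimately have "a - a' = 0"
    proof (rule_tac ccontr)
      assume "k dvd (a - a')" "\<bar>a - a'\<bar> < k" "a - a' \<noteq> 0"
      hence "\<bar>k\<bar> \<le> \<bar>a - a'\<bar>" using dvd_imp_le_int by blast
      thus False using \<open>\<bar>a - a'\<bar> < k\<close> kpos by simp
    qed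
    hence aa: "a = a'" by simp
    have "b * k = b' * k" using e1 ex aa by (metis add_left_cancel)
    hence "b = b'" using kpos by simp
    thus "p = (a, b)" using p aa by simp
  qed
qed

lemma ell_bez: "j \<ge> 1 \<Longrightarrow> ell x j * hh x j * ep x j + ell' x j * ee x j = dd x j"
proof -
  assume j: "j \<ge> 1"
  have u: "\<exists>!p. (case p of (a, b) \<Rightarrow> a * hh x j * ep x j + b * ee x j = dd x j \<and> 0 \<le> a \<and> a < ee x j div dd x j)"
    using bez_unique[OF ee_pos ep_pos[OF j] hh_ee_coprime] by (simp add: dd_eq[OF j])
  have "case ellpair x j of (a, b) \<Rightarrow> a * hh x j * ep x j + b * ee x j = dd x j \<and> 0 \<le> a \<and> a < ee x j div dd x j"
    unfolding ellpair_def by (rule theI'[OF u])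
  thus ?thesis by (cases "ellpair x j") (simp add: ell_def ell'_def)
qed

lemma dd_pos: "j \<ge> 1 \<Longrightarrow> dd x j > 0" using ee_pos[of x j] by (simp add: dd_eq)
lemma dd_dvd_ee: "j \<ge> 1 \<Longrightarrow> dd x j dvd ee x j" by (simp add: dd_eq)
lemma dd_dvd_ep: "j \<ge> 1 \<Longrightarrow> dd x j dvd ep x j" by (simp add: dd_eq)
lemma ep_Suc_mult: "j \<ge> 1 \<Longrightarrow> ep x (Suc j) * dd x j = ep x j * ee x j"
  by (simp add: ep_Suc dd_dvd_ee dvd_mult)

lemma ep_dvd_Suc: "j \<ge> 1 \<Longrightarrow> ep x j dvd ep x (Suc j)"
  by (simp add: ep_Suc dd_dvd_ee div_mult_swap[symmetric])

lemma ee_dvd_ep_Suc: "j \<ge> 1 \<Longrightarrow> ee x j dvd ep x (Suc j)"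
  by (simp add: ep_Suc dd_dvd_ep div_mult_swap[symmetric] mult.commute[of "ep x j"])

lemma ep_dvd_mono: assumes "1 \<le> l" "l \<le> j" shows "ep x l dvd ep x j"
  using assms(2) proof (induction j rule: dec_induct)
  case (step m) thus ?case using ep_dvd_Suc[of m x] dvd_trans assms(1) by fastforce
qed simp

lemma ee_dvd_ep: "1 \<le> l \<Longrightarrow> l < j \<Longrightarrow> ee x l dvd ep x j"
  using ee_dvd_ep_Suc[of l x] ep_dvd_mono[of "Suc l" j x] dvd_trans by auto



definition Ssum :: "(nat \<Rightarrow> rat) \<Rightarrow> (nat \<Rightarrow> rat) \<Rightarrow> nat \<Rightarrow> rat" where
  "Ssum x \<beta> m = (\<Sum>j\<in>{1..<m}. of_int (ell x j) * \<beta> j * (\<Prod>k\<in>{j<..<m}. of_int (ell' x k)))"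

definition solv :: "nat \<Rightarrow> (nat \<Rightarrow> rat) \<Rightarrow> (nat \<Rightarrow> rat) \<Rightarrow> nat \<Rightarrow> rat" where
  "solv n x \<beta> m = (if m \<in> {1..n} then (of_int (ee x m) * \<beta> m - of_int (hh x m) * of_int (ep x m) * Ssum x \<beta> m) / of_int (dd x m) else 0)"

lemma Ssum_Suc:
  assumes "m \<ge> 1"
  shows "Ssum x \<beta> (Suc m) = of_int (ell' x m) * Ssum x \<beta> m + of_int (ell x m) * \<beta> m"
proof -
  have s: "{1..<Suc m} = insert m {1..<m}" using assms by auto
  have p: "(\<Prod>k\<in>{j<..<Suc m}. of_int (ell' x k) :: rat) = of_int (ell' x m) * (\<Prod>k\<in>{j<..<m}. of_int (ell' x k))"
    if "j \<in> {1..<m}" for j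
  proof -
    have "{j<..<Suc m} = insert m {j<..<m}" using that by auto
    thus ?thesis by simp
  qed
  have e: "{m<..<Suc m} = {}" by auto
  have "Ssum x \<beta> (Suc m) = of_int (ell x m) * \<beta> m + (\<Sum>j\<in>{1..<m}. of_int (ell x j) * \<beta> j * (\<Prod>k\<in>{j<..<Suc m}. of_int (ell' x k)))"
    unfolding Ssum_def s by (simp add: e)
  also have "(\<Sum>j\<in>{1..<m}. of_int (ell x j) * \<beta> j * (\<Prod>k\<in>{j<..<Suc m}. of_int (ell' x k))) = of_int (ell' x m) * Ssum x \<beta> m"
    unfolding Ssum_def sum_distrib_left by (rule sum.cong) (auto simp: p)
  finally show ?thesis by simp
qed

lemma rat_bez: "j \<ge> 1 \<Longrightarrow> (of_int (dd x j) :: rat) = of_int (ell x j) * of_int (hh x j) * of_int (ep x j) + of_int (ell' x j) * of_int (ee x j)"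
  using ell_bez[of j x] by (metis of_int_add of_int_mult)

lemma rat_ep_Suc: "j \<ge> 1 \<Longrightarrow> (of_int (ep x (Suc j)) :: rat) = of_int (ep x j) * of_int (ee x j) / of_int (dd x j)"
  using ep_Suc_mult[of j x] dd_pos[of j x] by (simp add: field_simps) (metis of_int_mult)

lemma T_lemma:
  assumes "1 \<le> m" "m \<le> Suc n"
  shows "(\<Sum>j\<in>{1..<m}. of_int (ell x j * ep x j) * solv n x \<beta> j) = of_int (ep x m) * Ssum x \<beta> m"
  using assms
proof (induction m)
  case 0 thus ?case by simp
next
  case (Suc m)
  show ?case
  proof (cases "m = 0")
    case True thus ?thesis by (simp add: Ssum_def)
  next
  case False
  have m1: "m \<ge> 1" "m \<le> n" using Suc False by auto
  have s: "{1..<Suc m} = insert m {1..<m}" using m1 by auto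
  have IH: "(\<Sum>j\<in>{1..<m}. of_int (ell x j * ep x j) * solv n x \<beta> j) = of_int (ep x m) * Ssum x \<beta> m"
    using Suc m1 by simp
  have dpos: "(of_int (dd x m) :: rat) \<noteq> 0" using dd_pos[OF m1(1), of x] by simp
  have sv: "solv n x \<beta> m = (of_int (ee x m) * \<beta> m - of_int (hh x m) * of_int (ep x m) * Ssum x \<beta> m) / of_int (dd x m)"
    using m1 by (simp add: solv_def)
  have "(\<Sum>j\<in>{1..<Suc m}. of_int (ell x j * ep x j) * solv n x \<beta> j)
        = of_int (ep x m) * Ssum x \<beta> m + of_int (ell x m * ep x m) * solv n x \<beta> m"
    unfolding s using IH by simp
  also have "\<dots> = of_int (ep x (Suc m)) * Ssum x \<beta> (Suc m)"
    unfolding Ssum_Suc[OF m1(1)] rat_ep_Suc[OF m1(1)] sv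
    using dpos rat_bez[OF m1(1), of x] by (simp add: field_simps)
  finally show ?thesis .
  qed
qed



lemma sum_split3:
  fixes m n :: nat and f :: "nat \<Rightarrow> 'a::comm_monoid_add"
  assumes "m \<in> {1..n}"
  shows "(\<Sum>j\<in>{1..n}. f j) = (\<Sum>j\<in>{1..<m}. f j) + f m + (\<Sum>j\<in>{m<..n}. f j)"
proof -
  have "{1..n} = {1..<m} \<union> ({m} \<union> {m<..n})" using assms by auto
  moreover have "{1..<m} \<inter> ({m} \<union> {m<..n}) = {}" by fastforce
  ultimately have "(\<Sum>j\<in>{1..n}. f j) = (\<Sum>j\<in>{1..<m}. f j) + (\<Sum>j\<in>{m} \<union> {m<..n}. f j)"
    by (simp add: sum.union_disjoint ac_simps)
  also have "(\<Sum>j\<in>{m} \<union> {m<..n}. f j) = f m + (\<Sum>j\<in>{m<..n}. f j)"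
    by (subst sum.union_disjoint) auto
  finally show ?thesis by (simp add: add.assoc)
qed

lemma QS0:
  assumes "m \<in> {1..n}"
  shows "(\<Sum>j\<in>{1..n}. Qm x m j * y j) = x m * (\<Sum>j\<in>{1..<m}. of_int (ell x j * ep x j) * y j) + of_int (dd x m) / of_int (ee x m) * y m"
proof -
  have "(\<Sum>j\<in>{1..n}. Qm x m j * y j) = (\<Sum>j\<in>{1..<m}. Qm x m j * y j) + Qm x m m * y m + (\<Sum>j\<in>{m<..n}. Qm x m j * y j)"
    by (rule sum_split3[OF assms])
  also have "(\<Sum>j\<in>{m<..n}. Qm x m j * y j) = 0" by (rule sum.neutral) (auto simp: Qm_def)
  also have "(\<Sum>j\<in>{1..<m}. Qm x m j * y j) = x m * (\<Sum>j\<in>{1..<m}. of_int (ell x j * ep x j) * y j)"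
    unfolding sum_distrib_left by (rule sum.cong) (auto simp: Qm_def)
  finally show ?thesis by (simp add: Qm_def)
qed

lemma dd_ee_rat: "m \<ge> 1 \<Longrightarrow> (of_int (dd x m) / of_int (ee x m) :: rat) = of_int (ell' x m) + of_int (ell x m * ep x m) * x m"
  using rat_bez[of m x] ee_pos[of x m] by (simp add: x_eq[of x m] field_simps)

lemma QS:
  assumes "m \<in> {1..n}"
  shows "(\<Sum>j\<in>{1..n}. Qm x m j * y j) = of_int (ell' x m) * y m + x m * (\<Sum>j\<in>{1..n}. of_int (ell x j * ep x j) * y j)
           - x m * (\<Sum>j\<in>{m<..n}. of_int (ell x j * ep x j) * y j)"
proof -
  have gen: "\<And>d b A xm S1 S2 ym :: rat. d = b + A * xm \<Longrightarrow> xm * S1 + d * ym = b * ym + xm * (S1 + A * ym + S2) - xm * S2"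
    by (simp add: algebra_simps)
  show ?thesis
    unfolding QS0[OF assms] sum_split3[OF assms, of "\<lambda>j. of_int (ell x j * ep x j) * y j"]
    by (rule gen) (use assms dd_ee_rat[of m x] in simp)
qed

lemma solves:
  assumes "m \<in> {1..n}"
  shows "(\<Sum>j\<in>{1..n}. Qm x m j * solv n x \<beta> j) = \<beta> m"
proof -
  have m: "1 \<le> m" "m \<le> Suc n" using assms by auto
  have "(\<Sum>j\<in>{1..n}. Qm x m j * solv n x \<beta> j) = x m * (of_int (ep x m) * Ssum x \<beta> m)
       + of_int (dd x m) / of_int (ee x m) * solv n x \<beta> m"
    unfolding QS0[OF assms] T_lemma[OF m] ..
  also have "\<dots> = \<beta> m"
  proof -
    have gen: "\<And>e d h E S b :: rat. e \<noteq> 0 \<Longrightarrow> d \<noteq> 0 \<Longrightarrow> h / e * (E * S) + d / e * ((e * b - h * E * S) / d) = b"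
      by (simp add: field_simps)
    have sv: "solv n x \<beta> m = (of_int (ee x m) * \<beta> m - of_int (hh x m) * of_int (ep x m) * Ssum x \<beta> m) / of_int (dd x m)"
      using assms by (simp add: solv_def)
    show ?thesis unfolding x_eq[of x m] sv
      by (rule gen) (use assms dd_pos[of m x] ee_pos[of x m] in simp_all)
  qed
  finally show ?thesis .
qed

lemma uniq0:
  assumes "\<forall>m\<in>{1..n}. (\<Sum>j\<in>{1..n}. Qm x m j * z j) = 0"
  shows "\<forall>m\<in>{1..n}. z m = 0"
proof -
  have "m \<in> {1..n} \<longrightarrow> z m = 0" for m
  proof (induction m rule: less_induct)
    case (less m)
    show ?case
    proof
      assume mi: "m \<in> {1..n}"
      have "0 = (\<Sum>j\<in>{1..n}. Qm x m j * z j)" using assms mi by simp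
      also have "\<dots> = x m * (\<Sum>j\<in>{1..<m}. of_int (ell x j * ep x j) * z j) + of_int (dd x m) / of_int (ee x m) * z m"
        by (rule QS0[OF mi])
      also have "(\<Sum>j\<in>{1..<m}. of_int (ell x j * ep x j) * z j) = 0"
        using less mi by (intro sum.neutral) auto
      finally have "of_int (dd x m) / of_int (ee x m) * z m = 0" by simp
      thus "z m = 0" using dd_pos[of m x] ee_pos[of x m] mi by simp
    qed
  qed
  thus ?thesis by blast
qed

lemma lsolve_eq:
  assumes "\<forall>m\<in>{1..n}. (\<Sum>j\<in>{1..n}. Qm x m j * y j) = w m"
    and "\<forall>j. j \<notin> {1..n} \<longrightarrow> y j = 0"
  shows "lsolve n (Qm x) w = y"
  unfolding lsolve_def
proof (rule the_equality)
  show "(\<forall>m\<in>{1..n}. (\<Sum>j\<in>{1..n}. Qm x m j * y j) = w m) \<and> (\<forall>j. j \<notin> {1..n} \<longrightarrow> y j = 0)"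
    using assms by blast
next
  fix y' assume y': "(\<forall>m\<in>{1..n}. (\<Sum>j\<in>{1..n}. Qm x m j * y' j) = w m) \<and> (\<forall>j. j \<notin> {1..n} \<longrightarrow> y' j = 0)"
  have "\<forall>m\<in>{1..n}. (\<Sum>j\<in>{1..n}. Qm x m j * (y' j - y j)) = 0"
    using y' assms(1) by (simp add: right_diff_distrib sum_subtractf)
  hence "\<forall>m\<in>{1..n}. y' m - y m = 0" by (rule uniq0)
  show "y' = y"
  proof
    fix j show "y' j = y j"
      using \<open>\<forall>m\<in>{1..n}. y' m - y m = 0\<close> y' assms(2) by (cases "j \<in> {1..n}") auto
  qed
qed

lemma lsolve_solv: "lsolve n (Qm x) w = solv n x w"
proof (rule lsolve_eq)
  show "\<forall>m\<in>{1..n}. (\<Sum>j\<in>{1..n}. Qm x m j * solv n x w j) = w m" using solves by blast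
  show "\<forall>j. j \<notin> {1..n} \<longrightarrow> solv n x w j = 0" by (simp add: solv_def)
qed



definition isint :: "nat \<Rightarrow> (nat \<Rightarrow> rat) \<Rightarrow> bool" where
  "isint n w \<longleftrightarrow> (\<forall>j\<in>{1..n}. w j \<in> \<int>)"

lemma Ssum_int:
  assumes "\<forall>j\<in>{1..<m}. \<beta> j \<in> \<int>"
  shows "Ssum x \<beta> m \<in> \<int>"
  unfolding Ssum_def using assms by (intro Ints_sum Ints_mult Ints_prod) auto

lemma solv_int:
  assumes "isint n \<beta>"
  shows "solv n x \<beta> m \<in> \<int>"
proof (cases "m \<in> {1..n}")
  case True
  have m1: "m \<ge> 1" using True by simp
  obtain e' where e': "ee x m = dd x m * e'" using dd_dvd_ee[OF m1] by (metis dvdE)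
  obtain E' where E': "ep x m = dd x m * E'" using dd_dvd_ep[OF m1] by (metis dvdE)
  have d0: "(of_int (dd x m) :: rat) \<noteq> 0" using dd_pos[OF m1, of x] by simp
  have S: "Ssum x \<beta> m \<in> \<int>" using assms True by (intro Ssum_int) (auto simp: isint_def)
  have b: "\<beta> m \<in> \<int>" using assms True by (auto simp: isint_def)
  have "solv n x \<beta> m = of_int e' * \<beta> m - of_int (hh x m) * of_int E' * Ssum x \<beta> m"
    using True d0 by (simp add: solv_def e' E' field_simps)
  thus ?thesis using S b by simp
qed (auto simp: solv_def)

lemma Ssum_x:
  assumes "1 \<le> m" "m \<le> Suc n"
  shows "1 - of_int (ep x m) * Ssum x x m = of_int (ep x m) * (\<Prod>k\<in>{1..<m}. of_int (ell' x k))"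
  using assms
proof (induction m)
  case 0 thus ?case by simp
next
  case (Suc m)
  show ?case
  proof (cases "m = 0")
    case True thus ?thesis by (simp add: Ssum_def ep_1)
  next
    case False
    have m1: "m \<ge> 1" "m \<le> n" using Suc False by auto
    have s: "{1..<Suc m} = insert m {1..<m}" using m1 by auto
    have pr: "(\<Prod>k\<in>{1..<Suc m}. of_int (ell' x k) :: rat) = of_int (ell' x m) * (\<Prod>k\<in>{1..<m}. of_int (ell' x k))"
      unfolding s by simp
    have IH: "1 - of_int (ep x m) * Ssum x x m = of_int (ep x m) * (\<Prod>k\<in>{1..<m}. of_int (ell' x k))"
      using Suc m1 by simp
    have gen: "\<And>E e d a h b S P :: rat. e \<noteq> 0 \<Longrightarrow> d \<noteq> 0 \<Longrightarrow> d = a * h * E + b * e \<Longrightarrow> 1 - E * S = E * P \<Longrightarrow>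
        1 - E * e / d * (b * S + a * (h / e)) = E * e / d * (b * P)"
    proof -
      fix E e d a h b S P :: rat
      assume e: "e \<noteq> 0" and d: "d \<noteq> 0" and dd: "d = a * h * E + b * e" and i: "1 - E * S = E * P"
      have "1 - E * e / d * (b * S + a * (h / e)) = (d - a * h * E - e * b * (E * S)) / d"
        using e d by (simp add: field_simps)
      also have "\<dots> = (b * e - e * b * (1 - E * P)) / d"
      proof -
        have ES: "E * S = 1 - E * P" using i by simp
        show ?thesis unfolding ES dd by (simp add: algebra_simps)
      qed
      also have "\<dots> = E * e / d * (b * P)" using d by (simp add: field_simps)
      finally show "1 - E * e / d * (b * S + a * (h / e)) = E * e / d * (b * P)" .
    qed
    show ?thesis
      unfolding Ssum_Suc[OF m1(1)] rat_ep_Suc[OF m1(1)] x_eq[of x m] pr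
      apply (rule gen)
      using ee_pos[of x m] dd_pos[OF m1(1), of x] rat_bez[OF m1(1), of x] IH by auto
  qed
qed

lemma solv_x_int: "solv n x x m \<in> \<int>"
proof (cases "m \<in> {1..n}")
  case True
  have m1: "m \<ge> 1" "m \<le> Suc n" using True by auto
  obtain E' where E': "ep x m = dd x m * E'" using dd_dvd_ep[OF m1(1)] by (metis dvdE)
  have d0: "(of_int (dd x m) :: rat) \<noteq> 0" using dd_pos[OF m1(1), of x] by simp
  have e0: "(of_int (ee x m) :: rat) \<noteq> 0" using ee_pos[of x m] by simp
  have "solv n x x m = of_int (hh x m) * (1 - of_int (ep x m) * Ssum x x m) / of_int (dd x m)"
    using True e0 by (simp add: solv_def x_eq[of x m] field_simps)
  also have "\<dots> = of_int (hh x m) * of_int E' * (\<Prod>k\<in>{1..<m}. of_int (ell' x k))"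
    unfolding Ssum_x[OF m1] using d0 by (simp add: E')
  finally show ?thesis by (auto intro!: Ints_mult Ints_prod)
qed (auto simp: solv_def)

lemma solv_lin: "solv n x (\<lambda>j. u j + c * w j) = (\<lambda>j. solv n x u j + c * solv n x w j)"
proof -
  have "lsolve n (Qm x) (\<lambda>j. u j + c * w j) = (\<lambda>j. solv n x u j + c * solv n x w j)"
  proof (rule lsolve_eq)
    show "\<forall>m\<in>{1..n}. (\<Sum>j\<in>{1..n}. Qm x m j * (solv n x u j + c * solv n x w j)) = u m + c * w m"
    proof
      fix m assume m: "m \<in> {1..n}"
      have "(\<Sum>j\<in>{1..n}. Qm x m j * (solv n x u j + c * solv n x w j))
          = (\<Sum>j\<in>{1..n}. Qm x m j * solv n x u j) + c * (\<Sum>j\<in>{1..n}. Qm x m j * solv n x w j)"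
        by (simp add: distrib_left sum.distrib sum_distrib_left mult.left_commute[of _ c])
      also have "\<dots> = u m + c * w m" using solves[OF m] by simp
      finally show "(\<Sum>j\<in>{1..n}. Qm x m j * (solv n x u j + c * solv n x w j)) = u m + c * w m" .
    qed
    show "\<forall>j. j \<notin> {1..n} \<longrightarrow> solv n x u j + c * solv n x w j = 0" by (simp add: solv_def)
  qed
  thus ?thesis by (simp add: lsolve_solv)
qed



lemma Ax_int:
  assumes "m \<in> {1..n}" "j \<in> {m<..n}"
  shows "of_int (ell x j * ep x j) * x m \<in> \<int>"
proof -
  obtain q where q: "ep x j = ee x m * q" using ee_dvd_ep[of m j x] assms by (auto elim: dvdE)
  have "of_int (ell x j * ep x j) * x m = (of_int (ell x j * q * hh x m) :: rat)"
    using ee_pos[of x m] by (simp add: x_eq[of x m] q field_simps)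
  thus ?thesis by (metis Ints_of_int)
qed

lemma step_iff: "isint n (solv n x w) \<longleftrightarrow> (\<exists>t::int. isint n (\<lambda>j. w j - of_int t * x j))"
proof
  assume y: "isint n (solv n x w)"
  define y where "y = solv n x w"
  define t0 where "t0 = (\<Sum>j\<in>{1..n}. of_int (ell x j * ep x j) * y j)"
  have "t0 \<in> \<int>" using y unfolding t0_def y_def isint_def by (intro Ints_sum Ints_mult) auto
  then obtain t where t: "t0 = of_int t" by (auto elim: Ints_cases)
  have "isint n (\<lambda>j. w j - of_int t * x j)" unfolding isint_def
  proof
    fix m assume m: "m \<in> {1..n}"
    have "w m = (\<Sum>j\<in>{1..n}. Qm x m j * y j)" unfolding y_def using solves[OF m] by simp
    also have "\<dots> = of_int (ell' x m) * y m + x m * t0 - x m * (\<Sum>j\<in>{m<..n}. of_int (ell x j * ep x j) * y j)"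
      unfolding QS[OF m] t0_def by (simp add: mult.commute)
    finally have "w m - of_int t * x m = of_int (ell' x m) * y m - (\<Sum>j\<in>{m<..n}. (of_int (ell x j * ep x j) * x m) * y j)"
      by (simp add: t sum_distrib_left algebra_simps)
    moreover have "(\<Sum>j\<in>{m<..n}. (of_int (ell x j * ep x j) * x m) * y j) \<in> \<int>"
    proof (rule Ints_sum)
      fix j assume j: "j \<in> {m<..n}"
      have "y j \<in> \<int>" using y j m unfolding y_def isint_def by auto
      thus "(of_int (ell x j * ep x j) * x m) * y j \<in> \<int>" using Ax_int[OF m j] by (rule_tac Ints_mult)
    qed
    moreover have "y m \<in> \<int>" using y m unfolding y_def isint_def by auto
    ultimately show "w m - of_int t * x m \<in> \<int>" by simp
  qed
  thus "\<exists>t::int. isint n (\<lambda>j. w j - of_int t * x j)" by blast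
next
  assume "\<exists>t::int. isint n (\<lambda>j. w j - of_int t * x j)"
  then obtain t :: int where t: "isint n (\<lambda>j. w j - of_int t * x j)" by blast
  have "w = (\<lambda>j. (w j - of_int t * x j) + of_int t * x j)" by simp
  hence "solv n x w = (\<lambda>j. solv n x (\<lambda>j. w j - of_int t * x j) j + of_int t * solv n x x j)"
    by (metis solv_lin)
  thus "isint n (solv n x w)" unfolding isint_def
    using solv_int[OF t, of x] solv_x_int[of n x] by simp
qed

fun crd :: "nat \<Rightarrow> (nat \<Rightarrow> nat \<Rightarrow> rat) \<Rightarrow> nat \<Rightarrow> (nat \<Rightarrow> rat) \<Rightarrow> nat \<Rightarrow> rat" where
  "crd n gam 0 v = (\<lambda>j. if j \<in> {1..n} then v j else 0)"
| "crd n gam (Suc i) v = solv n (gcoord n gam i i) (crd n gam i v)"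

lemma gcoord_crd: "gcoord n gam i k = crd n gam i (gam k)"
  by (induction i arbitrary: k) (auto simp: lsolve_solv)

lemma crd_lin: "crd n gam i (\<lambda>j. u j + c * w j) = (\<lambda>j. crd n gam i u j + c * crd n gam i w j)"
proof (induction i)
  case 0 thus ?case by auto
next
  case (Suc i) thus ?case by (simp add: solv_lin)
qed

lemma crd_cong: "(\<forall>j\<in>{1..n}. u j = w j) \<Longrightarrow> crd n gam i u = crd n gam i w"
proof (induction i)
  case 0 thus ?case by auto
qed simp

lemma isint_cong: "(\<forall>j\<in>{1..n}. u j = w j) \<Longrightarrow> isint n u = isint n w"
  by (simp add: isint_def)

lemma inLat_0: "inLat n gam 0 v \<longleftrightarrow> isint n v"
proof
  assume "inLat n gam 0 v" thus "isint n v" by (auto simp: inLat_def isint_def)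
next
  assume "isint n v"
  hence "\<forall>j\<in>{1..n}. \<exists>a::int. v j = of_int a" by (auto simp: isint_def elim: Ints_cases)
  then obtain a where "\<forall>j\<in>{1..n}. v j = of_int (a j)" by metis
  thus "inLat n gam 0 v" unfolding inLat_def by auto
qed

lemma inLat_Suc: "inLat n gam (Suc i) v \<longleftrightarrow> (\<exists>t::int. inLat n gam i (\<lambda>j. v j - of_int t * gam i j))"
proof
  assume "inLat n gam (Suc i) v"
  then obtain a b :: "nat \<Rightarrow> int" where ab: "\<forall>j\<in>{1..n}. v j = of_int (a j) + (\<Sum>l<Suc i. of_int (b l) * gam l j)"
    by (auto simp: inLat_def)
  have "\<forall>j\<in>{1..n}. v j - of_int (b i) * gam i j = of_int (a j) + (\<Sum>l<i. of_int (b l) * gam l j)"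
    using ab by simp
  thus "\<exists>t::int. inLat n gam i (\<lambda>j. v j - of_int t * gam i j)" unfolding inLat_def by blast
next
  assume "\<exists>t::int. inLat n gam i (\<lambda>j. v j - of_int t * gam i j)"
  then obtain t :: int and a b :: "nat \<Rightarrow> int" where ab: "\<forall>j\<in>{1..n}. v j - of_int t * gam i j = of_int (a j) + (\<Sum>l<i. of_int (b l) * gam l j)"
    by (auto simp: inLat_def)
  define b' where "b' = b(i := t)"
  have "\<forall>j\<in>{1..n}. v j = of_int (a j) + (\<Sum>l<Suc i. of_int (b' l) * gam l j)"
  proof
    fix j assume j: "j \<in> {1..n}"
    have "(\<Sum>l<i. of_int (b' l) * gam l j) = (\<Sum>l<i. of_int (b l) * gam l j)"
      by (rule sum.cong) (auto simp: b'_def)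
    thus "v j = of_int (a j) + (\<Sum>l<Suc i. of_int (b' l) * gam l j)"
      using ab j by (simp add: b'_def algebra_simps)
  qed
  thus "inLat n gam (Suc i) v" unfolding inLat_def by blast
qed

lemma lattice: "inLat n gam i v \<longleftrightarrow> isint n (crd n gam i v)"
proof (induction i arbitrary: v)
  case 0
  show ?case unfolding inLat_0 by (rule isint_cong) simp
next
  case (Suc i)
  have "inLat n gam (Suc i) v \<longleftrightarrow> (\<exists>t::int. isint n (crd n gam i (\<lambda>j. v j + (- of_int t) * gam i j)))"
    unfolding inLat_Suc Suc.IH by simp
  also have "\<dots> \<longleftrightarrow> (\<exists>t::int. isint n (\<lambda>j. crd n gam i v j - of_int t * gcoord n gam i i j))"
    unfolding crd_lin gcoord_crd by simp
  also have "\<dots> \<longleftrightarrow> isint n (crd n gam (Suc i) v)"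
    by (simp add: step_iff)
  finally show ?case .
qed



lemma crd_zero: "crd n gam i (\<lambda>_. 0) = (\<lambda>_. 0)"
  by (induction i) (auto simp: solv_def Ssum_def)

lemma crd_smult: "crd n gam i (\<lambda>j. c * w j) = (\<lambda>j. c * crd n gam i w j)"
  using crd_lin[of n gam i "\<lambda>_. 0" c w] by (simp add: crd_zero)

lemma scal_int_iff:
  fixes h e k :: int
  assumes "e > 0" "coprime h e"
  shows "(of_int k * (of_int h / of_int e) :: rat) \<in> \<int> \<longleftrightarrow> e dvd k"
proof
  assume "of_int k * (of_int h / of_int e) \<in> (\<int> :: rat set)"
  then obtain z where z: "of_int k * (of_int h / of_int e) = (of_int z :: rat)" by (auto elim: Ints_cases)
  hence "(of_int (k * h) :: rat) = of_int (z * e)" using assms(1) by (simp add: field_simps)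
  hence "k * h = z * e" by (simp only: of_int_eq_iff)
  hence "e dvd k * h" by (metis dvd_triv_right)
  thus "e dvd k" using assms(2) by (simp add: coprime_commute coprime_dvd_mult_left_iff)
next
  assume "e dvd k"
  then obtain q where "k = e * q" by (auto elim: dvdE)
  thus "of_int k * (of_int h / of_int e) \<in> (\<int> :: rat set)" using assms(1) by simp
qed

lemma ep_Suc_lcm: "m \<ge> 1 \<Longrightarrow> ep x (Suc m) = lcm (ep x m) (ee x m)"
proof -
  assume m: "m \<ge> 1"
  have "lcm (ep x m) (ee x m) = normalize (ep x m * ee x m div gcd (ep x m) (ee x m))" by (rule lcm_gcd)
  also have "gcd (ep x m) (ee x m) = dd x m" using m by (simp add: dd_eq gcd.commute)
  also have "ep x m * ee x m div dd x m = ep x (Suc m)" using m by (simp add: ep_Suc)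
  also have "normalize (ep x (Suc m)) = ep x (Suc m)" using ep_pos[of "Suc m" x] by simp
  finally show ?thesis by simp
qed

lemma ep_dvd_iff: "m \<ge> 1 \<Longrightarrow> ep x m dvd K \<longleftrightarrow> (\<forall>j\<in>{1..<m}. ee x j dvd K)"
proof (induction m rule: dec_induct)
  case base thus ?case by (simp add: ep_1)
next
  case (step m)
  have s: "{1..<Suc m} = insert m {1..<m}" using step by auto
  show ?case unfolding ep_Suc_lcm[OF step(1)] s using step by (simp add: conj_commute)
qed

lemma eidx_eq: "eidx n gam i = nat (ep (gcoord n gam i i) (Suc n))"
proof -
  define x where "x = gcoord n gam i i"
  have iff: "inLat n gam i (\<lambda>j. of_nat k * gam i j) \<longleftrightarrow> ep x (Suc n) dvd int k" for k
  proof -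
    have "inLat n gam i (\<lambda>j. of_nat k * gam i j) \<longleftrightarrow> isint n (\<lambda>j. of_nat k * x j)"
      unfolding lattice crd_smult x_def gcoord_crd ..
    also have "\<dots> \<longleftrightarrow> (\<forall>j\<in>{1..n}. ee x j dvd int k)"
    proof -
      have "(of_int (int k) * (of_int (hh x j) / of_int (ee x j)) :: rat) \<in> \<int> \<longleftrightarrow> ee x j dvd int k" for j
        by (rule scal_int_iff[OF ee_pos hh_ee_coprime])
      thus ?thesis unfolding isint_def by (simp add: x_eq[of x])
    qed
    also have "\<dots> \<longleftrightarrow> ep x (Suc n) dvd int k"
      using ep_dvd_iff[of "Suc n" x "int k"] by (simp add: atLeastLessThanSuc_atLeastAtMost)
    finally show ?thesis .
  qed
  have Epos: "ep x (Suc n) > 0" by (rule ep_pos) simp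
  show ?thesis unfolding eidx_def x_def[symmetric] iff
  proof (rule Least_equality)
    show "0 < nat (ep x (Suc n)) \<and> ep x (Suc n) dvd int (nat (ep x (Suc n)))" using Epos by simp
  next
    fix y assume "0 < y \<and> ep x (Suc n) dvd int y"
    thus "nat (ep x (Suc n)) \<le> y" using zdvd_imp_le[of "ep x (Suc n)" "int y"] by simp
  qed
qed



definition NF :: "nat \<Rightarrow> 'a::field \<Rightarrow> (nat \<Rightarrow> 'a) \<Rightarrow> int \<Rightarrow> (nat \<Rightarrow> int) \<Rightarrow> 'a" where
  "NF n f p c g = f powi c * (\<Prod>l\<in>{1..n}. p l powi g l)"

lemma NF_nz: "f \<noteq> 0 \<Longrightarrow> \<forall>l\<in>{1..n}. p l \<noteq> 0 \<Longrightarrow> NF n f p c g \<noteq> 0"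
  by (auto simp: NF_def power_int_not_zero)

lemma NF_mult:
  assumes "f \<noteq> 0" "\<forall>l\<in>{1..n}. p l \<noteq> 0"
  shows "NF n f p c g * NF n f p c' g' = NF n f p (c + c') (\<lambda>l. g l + g' l)"
proof -
  have "(\<Prod>l\<in>{1..n}. p l powi (g l + g' l)) = (\<Prod>l\<in>{1..n}. p l powi g l * p l powi g' l)"
    using assms(2) by (intro prod.cong) (auto simp: power_int_add)
  thus ?thesis using assms(1) by (simp add: NF_def power_int_add prod.distrib algebra_simps)
qed

lemma NF_powi: "NF n f p c g powi k = NF n f p (c * k) (\<lambda>l. g l * k)"
  by (simp add: NF_def power_int_mult_distrib prod_powi_distrib power_int_mult)

lemma NF_zero: "NF n f p 0 (\<lambda>_. 0) = 1" by (simp add: NF_def)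

lemma NF_prod:
  assumes "f \<noteq> 0" "\<forall>l\<in>{1..n}. p l \<noteq> 0" "finite A"
  shows "(\<Prod>j\<in>A. NF n f p (c j) (g j)) = NF n f p (\<Sum>j\<in>A. c j) (\<lambda>l. \<Sum>j\<in>A. g j l)"
  using assms(3)
proof (induction A rule: finite_induct)
  case empty thus ?case by (simp add: NF_zero)
next
  case (insert a A) thus ?case by (simp add: NF_mult[OF assms(1,2)])
qed

lemma NF_div:
  assumes "f \<noteq> 0" "\<forall>l\<in>{1..n}. p l \<noteq> 0"
  shows "NF n f p c g / NF n f p c' g' = NF n f p (c - c') (\<lambda>l. g l - g' l)"
proof -
  have "NF n f p (c - c') (\<lambda>l. g l - g' l) * NF n f p c' g' = NF n f p c g"
    by (simp add: NF_mult[OF assms])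
  thus ?thesis using NF_nz[OF assms] by (simp add: field_simps)
qed

lemma NF_cong: "c = c' \<Longrightarrow> \<forall>l\<in>{1..n}. g l = g' l \<Longrightarrow> NF n f p c g = NF n f p c' g'"
  by (simp add: NF_def)

lemma prod_split3:
  fixes m n :: nat and f :: "nat \<Rightarrow> 'a::comm_monoid_mult"
  assumes "m \<in> {1..n}"
  shows "(\<Prod>j\<in>{1..n}. f j) = (\<Prod>j\<in>{1..<m}. f j) * f m * (\<Prod>j\<in>{m<..n}. f j)"
proof -
  have "{1..n} = {1..<m} \<union> ({m} \<union> {m<..n})" using assms by auto
  moreover have "{1..<m} \<inter> ({m} \<union> {m<..n}) = {}" by fastforce
  ultimately have "(\<Prod>j\<in>{1..n}. f j) = (\<Prod>j\<in>{1..<m}. f j) * (\<Prod>j\<in>{m} \<union> {m<..n}. f j)"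
    by (simp add: prod.union_disjoint ac_simps)
  also have "(\<Prod>j\<in>{m} \<union> {m<..n}. f j) = f m * (\<Prod>j\<in>{m<..n}. f j)"
    by (subst prod.union_disjoint) auto
  finally show ?thesis by (simp add: mult.assoc)
qed

lemma piv_nz:
  assumes "\<forall>k<i. phi k \<noteq> 0" "\<forall>l\<in>{1..n}. p0 l \<noteq> 0"
  shows "\<forall>l\<in>{1..n}. piv n gam phi p0 i l \<noteq> 0"
  using assms(1)
proof (induction i)
  case 0 thus ?case using assms(2) by simp
next
  case (Suc i)
  have IH: "\<forall>l\<in>{1..n}. piv n gam phi p0 i l \<noteq> 0" using Suc by simp
  have ph: "phi i \<noteq> 0" using Suc by simp
  show ?case
  proof
    fix l assume l: "l \<in> {1..n}"
    have "(\<Prod>m\<in>{1..<l}. piv n gam phi p0 i m powi e m) \<noteq> 0" for e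
      using IH l by (subst prod_zero_iff) (auto simp: power_int_not_zero)
    thus "piv n gam phi p0 (Suc i) l \<noteq> 0" using IH l ph by (simp add: Let_def power_int_not_zero)
  qed
qed

definition Gx :: "(nat \<Rightarrow> rat) \<Rightarrow> nat \<Rightarrow> nat \<Rightarrow> int" where
  "Gx x j l = (if l < j then - (ell x j * ep x j * hh x l div ee x l) else if l = j then ell' x j else 0)"

lemma piv_NF:
  assumes "j \<in> {1..n}"
  shows "piv n gam phi p0 (Suc i) j = NF n (phi i) (piv n gam phi p0 i) (ell (gcoord n gam i i) j * ep (gcoord n gam i i) j) (Gx (gcoord n gam i i) j)"
proof -
  define x where "x = gcoord n gam i i"
  define p where "p = piv n gam phi p0 i"
  have "(\<Prod>l\<in>{1..n}. p l powi Gx x j l) = (\<Prod>l\<in>{1..<j}. p l powi Gx x j l) * p j powi Gx x j j * (\<Prod>l\<in>{j<..n}. p l powi Gx x j l)"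
    by (rule prod_split3[OF assms])
  also have "(\<Prod>l\<in>{j<..n}. p l powi Gx x j l) = 1" by (rule prod.neutral) (auto simp: Gx_def)
  also have "(\<Prod>l\<in>{1..<j}. p l powi Gx x j l) = (\<Prod>l\<in>{1..<j}. p l powi (- (ell x j * ep x j * hh x l div ee x l)))"
    by (rule prod.cong) (auto simp: Gx_def)
  finally show ?thesis
    by (simp add: NF_def x_def[symmetric] p_def[symmetric] Let_def Gx_def mult.assoc)
qed



lemma div_rat:
  assumes "ee x l dvd N"
  shows "(of_int (N * hh x l div ee x l) :: rat) = of_int N * x l"
proof -
  obtain q where q: "N = ee x l * q" using assms by (auto elim: dvdE)
  have "N * hh x l div ee x l = q * hh x l" using ee_pos[of x l] by (simp add: q)
  thus ?thesis using ee_pos[of x l] by (simp add: x_eq[of x l] q field_simps)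
qed

lemma Lval_Ssum: "of_int (Lval n gam i \<beta>) = Ssum (gcoord n gam i i) (\<lambda>j. of_int (\<beta> j)) (Suc n)"
proof -
  have a: "{1..<Suc n} = {1..n}" by auto
  have b: "{j<..<Suc n} = {j<..n}" for j by auto
  show ?thesis unfolding Lval_def Ssum_def Lcoef_def a b
    by (simp add: of_int_sum of_int_mult of_int_prod mult_ac)
qed

lemma E2:
  fixes \<beta> :: "nat \<Rightarrow> rat" and x :: "nat \<Rightarrow> rat"
  assumes l: "l \<in> {1..n}"
  defines "y \<equiv> solv n x \<beta>"
  shows "(\<Sum>j\<in>{1..n}. of_int (Gx x j l) * y j) - \<beta> l = - x l * (\<Sum>j\<in>{1..n}. of_int (ell x j * ep x j) * y j)"
proof -
  have "(\<Sum>j\<in>{1..n}. of_int (Gx x j l) * y j) = (\<Sum>j\<in>{1..<l}. of_int (Gx x j l) * y j) + of_int (Gx x l l) * y l + (\<Sum>j\<in>{l<..n}. of_int (Gx x j l) * y j)"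
    by (rule sum_split3[OF l])
  also have "(\<Sum>j\<in>{1..<l}. of_int (Gx x j l) * y j) = 0" by (rule sum.neutral) (auto simp: Gx_def)
  also have "(\<Sum>j\<in>{l<..n}. of_int (Gx x j l) * y j) = - (x l * (\<Sum>j\<in>{l<..n}. of_int (ell x j * ep x j) * y j))"
    unfolding sum_distrib_left sum_negf[symmetric]
  proof (rule sum.cong)
    fix j assume j: "j \<in> {l<..n}"
    have dv: "ee x l dvd ell x j * ep x j" using ee_dvd_ep[of l j x] l j by (auto intro: dvd_mult)
    show "of_int (Gx x j l) * y j = - (x l * (of_int (ell x j * ep x j) * y j))"
      using j div_rat[OF dv] by (simp add: Gx_def)
  qed simp
  finally have s1: "(\<Sum>j\<in>{1..n}. of_int (Gx x j l) * y j) = of_int (Gx x l l) * y l - (x l * (\<Sum>j\<in>{l<..n}. of_int (ell x j * ep x j) * y j))"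
    by simp
  have "\<beta> l = (\<Sum>j\<in>{1..n}. Qm x l j * y j)" unfolding y_def using solves[OF l] by simp
  also have "\<dots> = of_int (ell' x l) * y l + x l * (\<Sum>j\<in>{1..n}. of_int (ell x j * ep x j) * y j)
           - x l * (\<Sum>j\<in>{l<..n}. of_int (ell x j * ep x j) * y j)" by (rule QS[OF l])
  finally show ?thesis unfolding s1 by (simp add: Gx_def algebra_simps)
qed

theorem mainTheorem7:
  fixes n r :: nat
    and gam :: "nat \<Rightarrow> nat \<Rightarrow> rat"
    and phi :: "nat \<Rightarrow> 'a::field poly"
    and c0 :: "nat \<Rightarrow> 'a"
  assumes "\<forall>i\<le>r. lead_coeff (phi i) = 1"
    and "\<forall>j\<in>{1..n}. c0 j \<noteq> 0"
  shows "\<forall>i\<le>r. \<forall>\<beta> :: nat \<Rightarrow> int. \<exists>\<beta>' :: nat \<Rightarrow> int.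
           (\<forall>m\<in>{1..n}. (\<Sum>j\<in>{1..n}. Qm (gcoord n gam i i) m j * of_int (\<beta>' j)) = of_int (\<beta> m))
         \<and> pipow n gam (\<lambda>k. Fract (phi k) 1) (\<lambda>j. Fract [:c0 j:] 1) (Suc i) \<beta>'
             / pipow n gam (\<lambda>k. Fract (phi k) 1) (\<lambda>j. Fract [:c0 j:] 1) i \<beta>
           = Yv n gam (\<lambda>k. Fract (phi k) 1) (\<lambda>j. Fract [:c0 j:] 1) i
               powi Lval n gam i \<beta>"
proof (intro allI impI)
  fix i \<beta> assume ir: "i \<le> r"
  define \<Phi> where "\<Phi> = (\<lambda>k. Fract (phi k) 1)"
  define P where "P = (\<lambda>j. Fract [:c0 j:] 1)"
  define x where "x = gcoord n gam i i"
  define p where "p = piv n gam \<Phi> P i"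
  define b where "b = (\<lambda>j::nat. (of_int (\<beta> j) :: rat))"
  define y where "y = solv n x b"
  define \<beta>' where "\<beta>' = (\<lambda>j. \<lfloor>y j\<rfloor>)"
  define E where "E = ep x (Suc n)"
  define L where "L = Lval n gam i \<beta>"
  define A where "A = (\<lambda>j. ell x j * ep x j)"
  have fz: "Fract a 1 \<noteq> 0" if "a \<noteq> 0" for a :: "'a poly"
    using that by (simp add: Zero_fract_def eq_fract)
  have phinz: "\<forall>k\<le>r. \<Phi> k \<noteq> 0"
  proof (intro allI impI)
    fix k assume "k \<le> r"
    hence "lead_coeff (phi k) = 1" using assms(1) by simp
    hence "phi k \<noteq> 0" by auto
    thus "\<Phi> k \<noteq> 0" unfolding \<Phi>_def by (rule fz)
  qed
  have Pnz: "\<forall>l\<in>{1..n}. P l \<noteq> 0" using assms(2) unfolding P_def by (auto intro!: fz)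
  have pnz: "\<forall>l\<in>{1..n}. p l \<noteq> 0" unfolding p_def
    by (rule piv_nz[OF _ Pnz]) (use phinz ir in auto)
  have fnz: "\<Phi> i \<noteq> 0" using phinz ir by simp
  have yint: "y j \<in> \<int>" for j unfolding y_def by (rule solv_int) (simp add: isint_def b_def)
  have yb: "of_int (\<beta>' j) = y j" for j using yint[of j] unfolding \<beta>'_def by (auto elim: Ints_cases)
  have Epos: "E > 0" unfolding E_def by (rule ep_pos) simp
  have eidx: "int (eidx n gam i) = E" using Epos by (simp add: eidx_eq E_def x_def)
  have sol: "\<forall>m\<in>{1..n}. (\<Sum>j\<in>{1..n}. Qm x m j * of_int (\<beta>' j)) = of_int (\<beta> m)"
    using solves[of _ n x b] unfolding yb y_def b_def by simp
  have lhs1: "pipow n gam \<Phi> P (Suc i) \<beta>' = NF n (\<Phi> i) p (\<Sum>j\<in>{1..n}. A j * \<beta>' j) (\<lambda>l. \<Sum>j\<in>{1..n}. Gx x j l * \<beta>' j)"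
  proof -
    have "pipow n gam \<Phi> P (Suc i) \<beta>' = (\<Prod>j\<in>{1..n}. NF n (\<Phi> i) p (A j * \<beta>' j) (\<lambda>l. Gx x j l * \<beta>' j))"
      unfolding pipow_def
    proof (rule prod.cong)
      fix j assume j: "j \<in> {1..n}"
      show "piv n gam \<Phi> P (Suc i) j powi \<beta>' j = NF n (\<Phi> i) p (A j * \<beta>' j) (\<lambda>l. Gx x j l * \<beta>' j)"
        by (simp only: piv_NF[OF j] NF_powi A_def x_def p_def)
    qed simp
    also have "\<dots> = NF n (\<Phi> i) p (\<Sum>j\<in>{1..n}. A j * \<beta>' j) (\<lambda>l. \<Sum>j\<in>{1..n}. Gx x j l * \<beta>' j)"
      by (rule NF_prod[OF fnz pnz]) simp
    finally show ?thesis .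
  qed
  have lhs2: "pipow n gam \<Phi> P i \<beta> = NF n (\<Phi> i) p 0 \<beta>"
    by (simp add: pipow_def NF_def p_def)
  have rhs: "Yv n gam \<Phi> P i powi L = NF n (\<Phi> i) p (E * L) (\<lambda>l. - (E * hh x l div ee x l) * L)"
  proof -
    have "Yv n gam \<Phi> P i = NF n (\<Phi> i) p E (\<lambda>l. - (E * hh x l div ee x l))"
      unfolding Yv_def NF_def pipow_def Let_def x_def[symmetric] p_def[symmetric] eidx ..
    thus ?thesis by (simp add: NF_powi)
  qed
  have LS: "of_int L = Ssum x b (Suc n)" unfolding L_def x_def b_def by (rule Lval_Ssum)
  have e1r: "(\<Sum>j\<in>{1..n}. of_int (A j) * y j) = of_int E * of_int L"
  proof -
    have "{1..<Suc n} = {1..n}" by auto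
    thus ?thesis using T_lemma[of "Suc n" n x b] unfolding LS E_def A_def y_def by simp
  qed
  have e1: "(\<Sum>j\<in>{1..n}. A j * \<beta>' j) - 0 = E * L"
  proof -
    have "(of_int ((\<Sum>j\<in>{1..n}. A j * \<beta>' j) - 0) :: rat) = of_int (E * L)"
      using e1r by (simp add: of_int_sum yb)
    thus ?thesis by (simp only: of_int_eq_iff)
  qed
  have e2: "(\<Sum>j\<in>{1..n}. Gx x j l * \<beta>' j) - \<beta> l = - (E * hh x l div ee x l) * L" if l: "l \<in> {1..n}" for l
  proof -
    have dv: "ee x l dvd E" unfolding E_def by (rule ee_dvd_ep) (use l in auto)
    have "(of_int ((\<Sum>j\<in>{1..n}. Gx x j l * \<beta>' j) - \<beta> l) :: rat) = (\<Sum>j\<in>{1..n}. of_int (Gx x j l) * y j) - b l"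
      by (simp add: of_int_sum yb b_def)
    also have "\<dots> = - x l * (of_int E * of_int L)"
      using E2[OF l, of x b] e1r unfolding y_def A_def by simp
    also have "\<dots> = of_int (- (E * hh x l div ee x l) * L)"
      using div_rat[OF dv] by simp
    finally show ?thesis by (simp only: of_int_eq_iff)
  qed
  have main: "pipow n gam \<Phi> P (Suc i) \<beta>' / pipow n gam \<Phi> P i \<beta> = Yv n gam \<Phi> P i powi L"
    unfolding lhs1 lhs2 rhs NF_div[OF fnz pnz]
    by (rule NF_cong) (use e1 e2 in auto)
  show "\<exists>\<beta>' :: nat \<Rightarrow> int.
           (\<forall>m\<in>{1..n}. (\<Sum>j\<in>{1..n}. Qm (gcoord n gam i i) m j * of_int (\<beta>' j)) = of_int (\<beta> m))
         \<and> pipow n gam (\<lambda>k. Fract (phi k) 1) (\<lambda>j. Fract [:c0 j:] 1) (Suc i) \<beta>'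
             / pipow n gam (\<lambda>k. Fract (phi k) 1) (\<lambda>j. Fract [:c0 j:] 1) i \<beta>
           = Yv n gam (\<lambda>k. Fract (phi k) 1) (\<lambda>j. Fract [:c0 j:] 1) i
               powi Lval n gam i \<beta>"
    using sol main unfolding x_def \<Phi>_def P_def L_def by blast
qed

end
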